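(* Let $\{(x_i,y_i)\}_{i=1}^n$ be a dataset, $\alpha\in(0,1)$, and $g\in(0,1)$. Suppose an (unfair) learner is given which, on input any $w\in\Delta_n$, outputs a deterministic classifier $f$ with $\sum_{i=1}^n w_i\mathbf 1_{\{f(x_i)\neq y_i\}}\le g$. Consider the procedure "AdaBoost + Average" with $T$ rounds and step size $\eta>0$: set $w^1=(\frac1n,\dots,\frac1n)$; for $t=1,\dots,T$, feed $w^t$ to the learner, receive $f^t$ with losses $\ell_i^t=\mathbf 1_{\{f^t(x_i)\neq y_i\}}$, and set $w^{t+1}\in\Delta_n$ with $w_i^{t+1}\propto\exp\big(\eta\sum_{s=1}^t\ell_i^s\big)$; finally output the ensemble with model weights $\lambda=(\frac1T,\dots,\frac1T)$. Then there is an absolute constant $C$ such that for every $\delta>0$ and every $T\ge C\frac{\log n}{\delta^2}$, running this procedure with $\eta=\sqrt{8\log n/T}$ yields an ensemble whose training $\alpha$-CVaR zero-one loss $$\max_{w\in\Delta_n,\ w_i\le\frac1{\alpha n}\ \forall i}\ \sum_{i=1}^n w_i\,\frac1T\sum_{t=1}^T\ell_i^t$$ is at most $g+\delta$.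
   Context: $\Delta_n=\{w\in\mathbb R^n:w_i\ge0,\sum_iw_i=1\}$. The ensemble samples a base model uniformly from $f^1,\dots,f^T$ and predicts with it; its $\alpha$-CVaR zero-one loss is the displayed quantity, i.e. the maximum over weightings $w$ with $w_i\le 1/(\alpha n)$ of the weighted average of the per-sample expected zero-one losses. *)

theory Defs
  imports Complex_Main
begin

definition simplex :: "nat \<Rightarrow> (nat \<Rightarrow> real) set" where
  "simplex n = {w. (\<forall>i<n. 0 \<le> w i) \<and> (\<Sum>i<n. w i) = 1}"

definition zo_loss :: "('x \<Rightarrow> 'y) \<Rightarrow> (nat \<Rightarrow> 'x) \<Rightarrow> (nat \<Rightarrow> 'y) \<Rightarrow> nat \<Rightarrow> real" where
  "zo_loss f xs ys i = (if f (xs i) \<noteq> ys i then 1 else 0)"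

definition exp_weights :: "nat \<Rightarrow> real \<Rightarrow> (nat \<Rightarrow> real) \<Rightarrow> nat \<Rightarrow> real" where
  "exp_weights n \<eta> c = (\<lambda>i. exp (\<eta> * c i) / (\<Sum>j<n. exp (\<eta> * c j)))"

text \<open>AdaBoost cumulative losses: cum_loss ... t i = sum_{s=1}^t l_i^s,
  where round s (1-based) uses weights w^s = exp_weights of cum_loss (s-1).
  Hence w^1 is uniform.\<close>
fun cum_loss :: "((nat \<Rightarrow> real) \<Rightarrow> 'x \<Rightarrow> 'y) \<Rightarrow> (nat \<Rightarrow> 'x) \<Rightarrow> (nat \<Rightarrow> 'y) \<Rightarrow> nat \<Rightarrow> real
    \<Rightarrow> nat \<Rightarrow> nat \<Rightarrow> real" where
  "cum_loss L xs ys n \<eta> 0 = (\<lambda>i. 0)"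
| "cum_loss L xs ys n \<eta> (Suc t) =
     (\<lambda>i. cum_loss L xs ys n \<eta> t i
          + zo_loss (L (exp_weights n \<eta> (cum_loss L xs ys n \<eta> t))) xs ys i)"

text \<open>The weight vector w^{t+1} fed to the learner in round t+1 (t counted from 0).\<close>
definition ada_weights :: "((nat \<Rightarrow> real) \<Rightarrow> 'x \<Rightarrow> 'y) \<Rightarrow> (nat \<Rightarrow> 'x) \<Rightarrow> (nat \<Rightarrow> 'y) \<Rightarrow> nat \<Rightarrow> real
    \<Rightarrow> nat \<Rightarrow> nat \<Rightarrow> real" where
  "ada_weights L xs ys n \<eta> t = exp_weights n \<eta> (cum_loss L xs ys n \<eta> t)"

text \<open>The base model f^{t+1} returned by the learner in round t+1 (t counted from 0).\<close>
definition ada_model :: "((nat \<Rightarrow> real) \<Rightarrow> 'x \<Rightarrow> 'y) \<Rightarrow> (nat \<Rightarrow> 'x) \<Rightarrow> (nat \<Rightarrow> 'y) \<Rightarrow> nat \<Rightarrow> real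
    \<Rightarrow> nat \<Rightarrow> 'x \<Rightarrow> 'y" where
  "ada_model L xs ys n \<eta> t = L (ada_weights L xs ys n \<eta> t)"

definition cvar :: "real \<Rightarrow> nat \<Rightarrow> (nat \<Rightarrow> real) \<Rightarrow> real" where
  "cvar \<alpha> n l = (SUP w \<in> {w \<in> simplex n. \<forall>i<n. w i \<le> 1 / (\<alpha> * real n)}. \<Sum>i<n. w i * l i)"

definition ensemble_loss :: "((nat \<Rightarrow> real) \<Rightarrow> 'x \<Rightarrow> 'y) \<Rightarrow> (nat \<Rightarrow> 'x) \<Rightarrow> (nat \<Rightarrow> 'y) \<Rightarrow> nat \<Rightarrow> real
    \<Rightarrow> nat \<Rightarrow> nat \<Rightarrow> real" where
  "ensemble_loss L xs ys n \<eta> T i =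
     (1 / real T) * (\<Sum>t<T. zo_loss (ada_model L xs ys n \<eta> t) xs ys i)"

end

theory Submission imports Defs begin

lemma zo_01: "zo_loss f xs ys i = 0 \<or> zo_loss f xs ys i = 1"
  by (simp add: zo_loss_def)

lemma zo_nonneg: "0 \<le> zo_loss f xs ys i" and zo_le1: "zo_loss f xs ys i \<le> 1"
  by (simp_all add: zo_loss_def)

lemma cum_sum: "cum_loss L xs ys n \<eta> t i = (\<Sum>s<t. zo_loss (ada_model L xs ys n \<eta> s) xs ys i)"
  by (induction t) (simp_all add: ada_model_def ada_weights_def)

lemma ew_simplex:
  assumes "n \<ge> 1" shows "exp_weights n \<eta> c \<in> simplex n"
proof -
  have S: "(\<Sum>j<n. exp (\<eta> * c j)) > 0"
    using assms by (intro sum_pos) (auto simp: lessThan_empty_iff)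
  show ?thesis unfolding simplex_def exp_weights_def
    using S by (auto simp: sum_divide_distrib[symmetric])
qed

definition Phi where "Phi L xs ys n \<eta> t = (\<Sum>j<n. exp (\<eta> * cum_loss L xs ys n \<eta> t j))"

lemma phi_step:
  assumes n: "n \<ge> 1" and e0: "0 \<le> \<eta>" and e1: "\<eta> \<le> 1" and g: "0 \<le> g"
    and H: "\<forall>w \<in> simplex n. (\<Sum>i<n. w i * zo_loss (L w) xs ys i) \<le> g"
  shows "Phi L xs ys n \<eta> (Suc t) \<le> Phi L xs ys n \<eta> t * exp ((\<eta> + \<eta>\<^sup>2) * g)"
proof -
  define c where "c = cum_loss L xs ys n \<eta> t"
  define E where "E j = exp (\<eta> * c j)" for j
  define S where "S = (\<Sum>j<n. E j)"
  define w where "w = exp_weights n \<eta> c"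
  define l where "l j = zo_loss (L w) xs ys j" for j
  have Spos: "S > 0" unfolding S_def E_def using n by (intro sum_pos) (auto simp: lessThan_empty_iff)
  have wj: "w j = E j / S" for j unfolding w_def exp_weights_def E_def S_def by simp
  have ws: "w \<in> simplex n" unfolding w_def using ew_simplex n by blast
  have Hw: "(\<Sum>j<n. w j * l j) \<le> g" using H ws unfolding l_def by blast
  have eqS: "(\<Sum>j<n. E j * l j) = S * (\<Sum>j<n. w j * l j)"
    unfolding wj sum_distrib_left using Spos by (intro sum.cong) auto
  have "Phi L xs ys n \<eta> (Suc t) = (\<Sum>j<n. E j * exp (\<eta> * l j))"
    unfolding Phi_def E_def l_def w_def c_def
    by (simp add: distrib_left exp_add ada_weights_def)
  also have "\<dots> \<le> (\<Sum>j<n. E j * (1 + (\<eta> + \<eta>\<^sup>2) * l j))"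
  proof (intro sum_mono mult_left_mono)
    fix j
    show "exp (\<eta> * l j) \<le> 1 + (\<eta> + \<eta>\<^sup>2) * l j"
      using zo_01[of "L w" xs ys j] exp_bound[OF e0 e1] unfolding l_def by auto
    show "0 \<le> E j" unfolding E_def by simp
  qed
  also have "\<dots> = S + (\<eta> + \<eta>\<^sup>2) * (\<Sum>j<n. E j * l j)"
    by (simp add: S_def algebra_simps sum.distrib sum_distrib_left)
  also have "\<dots> = S + (\<eta> + \<eta>\<^sup>2) * (S * (\<Sum>j<n. w j * l j))"
    by (simp add: eqS)
  also have "\<dots> \<le> S + (\<eta> + \<eta>\<^sup>2) * (S * g)"
    using Hw Spos e0 by (intro add_left_mono mult_left_mono) auto
  also have "\<dots> = S * (1 + (\<eta> + \<eta>\<^sup>2) * g)" by (simp add: algebra_simps)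
  also have "\<dots> \<le> S * exp ((\<eta> + \<eta>\<^sup>2) * g)"
    using Spos by (intro mult_left_mono) auto
  finally show ?thesis unfolding S_def E_def c_def Phi_def .
qed

lemma phi_bound:
  assumes n: "n \<ge> 1" and e0: "0 \<le> \<eta>" and e1: "\<eta> \<le> 1" and g: "0 \<le> g"
    and H: "\<forall>w \<in> simplex n. (\<Sum>i<n. w i * zo_loss (L w) xs ys i) \<le> g"
  shows "Phi L xs ys n \<eta> t \<le> real n * exp (real t * ((\<eta> + \<eta>\<^sup>2) * g))"
proof (induction t)
  case 0 then show ?case by (simp add: Phi_def)
next
  case (Suc t)
  have "Phi L xs ys n \<eta> (Suc t) \<le> Phi L xs ys n \<eta> t * exp ((\<eta> + \<eta>\<^sup>2) * g)"
    by (rule phi_step[OF assms])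
  also have "\<dots> \<le> real n * exp (real t * ((\<eta> + \<eta>\<^sup>2) * g)) * exp ((\<eta> + \<eta>\<^sup>2) * g)"
    using Suc by (intro mult_right_mono) auto
  also have "\<dots> = real n * exp (real (Suc t) * ((\<eta> + \<eta>\<^sup>2) * g))"
    by (simp add: exp_add[symmetric] algebra_simps)
  finally show ?case .
qed

lemma cum_le_t: "cum_loss L xs ys n \<eta> t i \<le> real t"
  by (induction t) (simp_all, metis add.commute add_mono zo_le1)

lemma cum_nonneg: "0 \<le> cum_loss L xs ys n \<eta> t i"
  by (induction t) (auto simp: zo_nonneg)

lemma n1_case:
  assumes H: "\<forall>w \<in> simplex 1. (\<Sum>i<1. w i * zo_loss (L w) xs ys i) \<le> g"
  shows "cum_loss L xs ys 1 \<eta> t 0 \<le> real t * g"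
proof (induction t)
  case 0 then show ?case by simp
next
  case (Suc t)
  define w where "w = exp_weights 1 \<eta> (cum_loss L xs ys 1 \<eta> t)"
  have "w \<in> simplex 1" unfolding w_def by (rule ew_simplex) simp
  with H have "w 0 * zo_loss (L w) xs ys 0 \<le> g" by auto
  moreover have "w 0 = 1" unfolding w_def exp_weights_def by simp
  ultimately have "zo_loss (L w) xs ys 0 \<le> g" by simp
  with Suc show ?case by (simp add: w_def algebra_simps)
qed

lemma per_sample:
  assumes n: "n \<ge> 1" and g0: "0 < g" and g1: "g < 1"
    and H: "\<forall>w \<in> simplex n. (\<Sum>i<n. w i * zo_loss (L w) xs ys i) \<le> g"
    and d: "0 < \<delta>" and T: "T \<ge> 1" and TC: "real T \<ge> 11 * ln (real n) / \<delta>\<^sup>2"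
    and i: "i < n"
  shows "cum_loss L xs ys n (sqrt (8 * ln (real n) / real T)) T i \<le> real T * (g + \<delta>)"
proof -
  define \<eta> where "\<eta> = sqrt (8 * ln (real n) / real T)"
  define c where "c = cum_loss L xs ys n \<eta> T i"
  have Tpos: "real T > 0" using T by simp
  show ?thesis
  proof (cases "\<delta> \<ge> 1")
    case True
    have "cum_loss L xs ys n (sqrt (8 * ln (real n) / real T)) T i \<le> real T" by (rule cum_le_t)
    also have "\<dots> \<le> real T * (g + \<delta>)" using True g0 Tpos by simp
    finally show ?thesis .
  next
    case dl: False
    show ?thesis
    proof (cases "n = 1")
      case True
      then have "i = 0" using i by simp
      have H1: "\<forall>w \<in> simplex 1. (\<Sum>i<1. w i * zo_loss (L w) xs ys i) \<le> g" using H True by simp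
      have "cum_loss L xs ys n (sqrt (8 * ln (real n) / real T)) T i \<le> real T * g"
        using n1_case[OF H1] True \<open>i = 0\<close> by simp
      also have "\<dots> \<le> real T * (g + \<delta>)" using d Tpos by simp
      finally show ?thesis .
    next
      case False
      define a where "a = ln (real n)"
      have apos: "a > 0" unfolding a_def using n False by simp
      have d2: "\<delta>\<^sup>2 > 0" using d by simp
      have TD: "real T * \<delta>\<^sup>2 \<ge> 11 * a" using TC d2 unfolding a_def by (simp add: field_simps)
      have d21: "\<delta>\<^sup>2 < 1" using d dl by (simp add: power_less_one_iff)
      have TD2: "real T * \<delta>\<^sup>2 \<le> real T" using d21 Tpos by simp
      have eta2: "\<eta>\<^sup>2 = 8 * a / real T" unfolding \<eta>_def a_def using apos Tpos unfolding a_def by simp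
      have e0: "0 \<le> \<eta>" unfolding \<eta>_def using n by simp
      have epos: "0 < \<eta>" unfolding \<eta>_def using apos Tpos a_def by simp
      have "8 * a \<le> real T" using TD TD2 apos by linarith
      have "\<eta>\<^sup>2 \<le> 1" unfolding eta2 using \<open>8 * a \<le> real T\<close> Tpos by simp
      hence e1: "\<eta> \<le> 1" using e0 by (simp add: power_le_one_iff)
      have "exp (\<eta> * c) \<le> Phi L xs ys n \<eta> T"
        unfolding Phi_def c_def using i by (intro member_le_sum) auto
      also have "\<dots> \<le> real n * exp (real T * ((\<eta> + \<eta>\<^sup>2) * g))"
        by (rule phi_bound[OF n e0 e1 _ H]) (use g0 in simp)
      also have "\<dots> = exp (a + real T * ((\<eta> + \<eta>\<^sup>2) * g))"
        using n unfolding a_def by (simp add: exp_add)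
      finally have A: "\<eta> * c \<le> a + real T * ((\<eta> + \<eta>\<^sup>2) * g)" by simp
      have "real T * (\<eta>\<^sup>2 * g) \<le> real T * \<eta>\<^sup>2"
        using g1 Tpos by (intro mult_left_mono) (auto intro: mult_left_le)
      also have "real T * \<eta>\<^sup>2 = 8 * a" unfolding eta2 using Tpos by simp
      finally have B: "\<eta> * c \<le> 9 * a + \<eta> * real T * g" using A by (simp add: algebra_simps)
      have "(9 * a)\<^sup>2 \<le> (\<eta> * real T * \<delta>)\<^sup>2"
      proof -
        have "(\<eta> * real T * \<delta>)\<^sup>2 = \<eta>\<^sup>2 * real T * (real T * \<delta>\<^sup>2)" by (simp add: power_mult_distrib power2_eq_square)
        also have "\<dots> = 8 * a * (real T * \<delta>\<^sup>2)" unfolding eta2 using Tpos by simp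
        also have "\<dots> \<ge> 8 * a * (11 * a)" using TD apos by simp
        finally have "8 * a * (11 * a) \<le> (\<eta> * real T * \<delta>)\<^sup>2" .
        moreover have "(9 * a)\<^sup>2 \<le> 8 * a * (11 * a)" using apos by (simp add: power2_eq_square)
        ultimately show ?thesis by linarith
      qed
      hence "9 * a \<le> \<eta> * real T * \<delta>" by (rule power2_le_imp_le) (use epos Tpos d in simp)
      with B have "\<eta> * c \<le> \<eta> * (real T * (g + \<delta>))" by (simp add: algebra_simps)
      hence "c \<le> real T * (g + \<delta>)" using epos by simp
      thus ?thesis unfolding c_def \<eta>_def .
    qed
  qed
qed

theorem theorem2:
  shows "\<exists>C::real. \<forall>(n::nat) (xs::nat \<Rightarrow> 'x) (ys::nat \<Rightarrow> 'y) (\<alpha>::real) (g::real)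
           (L::(nat \<Rightarrow> real) \<Rightarrow> 'x \<Rightarrow> 'y) (\<delta>::real) (T::nat).
     n \<ge> 1 \<longrightarrow> 0 < \<alpha> \<longrightarrow> \<alpha> < 1 \<longrightarrow> 0 < g \<longrightarrow> g < 1 \<longrightarrow>
     (\<forall>w \<in> simplex n. (\<Sum>i<n. w i * zo_loss (L w) xs ys i) \<le> g) \<longrightarrow>
     0 < \<delta> \<longrightarrow> T \<ge> 1 \<longrightarrow> real T \<ge> C * ln (real n) / \<delta>\<^sup>2 \<longrightarrow>
     cvar \<alpha> n (ensemble_loss L xs ys n (sqrt (8 * ln (real n) / real T)) T) \<le> g + \<delta>"
proof (intro exI[of _ 11] allI impI)
  fix n :: nat and xs :: "nat \<Rightarrow> 'x" and ys :: "nat \<Rightarrow> 'y" and \<alpha> g :: real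
    and L :: "(nat \<Rightarrow> real) \<Rightarrow> 'x \<Rightarrow> 'y" and \<delta> :: real and T :: nat
  assume n: "n \<ge> 1" and a0: "0 < \<alpha>" and a1: "\<alpha> < 1" and g0: "0 < g" and g1: "g < 1"
    and H: "\<forall>w \<in> simplex n. (\<Sum>i<n. w i * zo_loss (L w) xs ys i) \<le> g"
    and d: "0 < \<delta>" and T: "T \<ge> 1" and TC: "real T \<ge> 11 * ln (real n) / \<delta>\<^sup>2"
  define \<eta> where "\<eta> = sqrt (8 * ln (real n) / real T)"
  define l where "l = ensemble_loss L xs ys n \<eta> T"
  have Tpos: "real T > 0" using T by simp
  have lb: "l i \<le> g + \<delta>" if i: "i < n" for i
  proof -
    have "l i = cum_loss L xs ys n \<eta> T i / real T"
      unfolding l_def ensemble_loss_def cum_sum by simp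
    also have "\<dots> \<le> real T * (g + \<delta>) / real T"
      using per_sample[OF n g0 g1 H d T TC i] Tpos unfolding \<eta>_def
      by (intro divide_right_mono) auto
    also have "\<dots> = g + \<delta>" using Tpos by simp
    finally show ?thesis .
  qed
  define W where "W = {w \<in> simplex n. \<forall>i<n. w i \<le> 1 / (\<alpha> * real n)}"
  have "(\<lambda>i. 1 / real n) \<in> W"
  proof -
    have "1 / real n \<le> 1 / (\<alpha> * real n)" using a0 a1 n
      by (intro divide_left_mono) (auto simp: mult_le_cancel_right1 less_imp_le)
    then show ?thesis unfolding W_def simplex_def using n by auto
  qed
  hence Wne: "W \<noteq> {}" by blast
  have "(SUP w \<in> W. \<Sum>i<n. w i * l i) \<le> g + \<delta>"
  proof (rule cSUP_least[OF Wne])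
    fix w assume "w \<in> W"
    hence ws: "\<forall>i<n. 0 \<le> w i" "(\<Sum>i<n. w i) = 1" unfolding W_def simplex_def by auto
    have "(\<Sum>i<n. w i * l i) \<le> (\<Sum>i<n. w i * (g + \<delta>))"
      using ws lb by (intro sum_mono mult_left_mono) auto
    also have "\<dots> = g + \<delta>" using ws by (simp add: sum_distrib_right[symmetric])
    finally show "(\<Sum>i<n. w i * l i) \<le> g + \<delta>" .
  qed
  thus "cvar \<alpha> n (ensemble_loss L xs ys n (sqrt (8 * ln (real n) / real T)) T) \<le> g + \<delta>"
    unfolding cvar_def W_def l_def \<eta>_def .
qed

end
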